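(* Let $\rho,\sigma$ be pure $n$-qubit states, and let $\epsilon_1>0$, $\epsilon_2>0$, $\delta>0$. Let $\tilde p_{\mathrm{mix}}$ be a distribution on $\{0,1\}^{2n}$ with $\|p_{\mathrm{mix}}-\tilde p_{\mathrm{mix}}\|_{\mathrm{TV}}<\Delta$. Let $f=\frac12(1+\mathrm{tr}(\rho\sigma))$ and let $f(N_1,N_2)=\frac{1}{N_1}\sum_{i=1}^{N_1}G(\hat\alpha_\rho(x_i),\hat\alpha_\sigma(x_i))$ be the symmetric-protocol estimator. Then $$|f(N_1,N_2)-f|\le 2\epsilon_1+2\sqrt{\epsilon_2}+\frac{F_\rho(\epsilon_2)}{2}+\frac{F_\sigma(\epsilon_2)}{2}+2\Delta$$ with probability at least $1-\delta$, provided that $N_1\ge(2\epsilon_1^2)^{-1}\ln(8/\delta)$ and $N_2\ge(2/\epsilon_2^2)\ln(8N_1/\delta)$.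
   Context: Pauli strings $P_x$, $x\in\{0,1\}^{2n}$, are the $n$-qubit Hermitian Pauli strings; $\alpha_\rho(x)=\mathrm{tr}(\rho P_x)$. The Pauli distribution of a pure state is $p_\rho(x)=\alpha_\rho(x)^2/2^n$, and $p_{\mathrm{mix}}=\frac12(p_\rho+p_\sigma)$. Symmetric protocol: draw $x_1,\dots,x_{N_1}$ i.i.d. from $\tilde p_{\mathrm{mix}}$; for each $i$, measure the observable $P_{x_i}$ $N_2$ times on fresh copies of $\rho$ and $N_2$ times on fresh copies of $\sigma$, and let $\hat\alpha_\rho(x_i),\hat\alpha_\sigma(x_i)$ be the empirical means of the $\pm1$ outcomes. $G(u,v)=\frac12\frac{(u+v)^2}{u^2+v^2}$ on $[-1,1]^2\setminus\{(0,0)\}$, with $G(0,0)$ set to an arbitrary fixed value in $[0,1]$. The CDF of a state is $F_\rho(\tau)=\sum_{x:\,\alpha_\rho(x)^2<\tau}p_\rho(x)$. $\|\cdot\|_{\mathrm{TV}}$ is total variation distance. *)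

theory Defs
  imports "HOL-Probability.Probability"
begin

text \<open>Computational basis of n qubits: bit strings of length n (True = |1>).\<close>
definition basis :: "nat \<Rightarrow> bool list set" where
  "basis n = {z. length z = n}"

text \<open>Pauli labels x in {0,1}^{2n}, written as a pair (a,b) of n-bit strings;
  on qubit j the factor is I (a_j=b_j=0), X (a_j=1,b_j=0), Z (a_j=0,b_j=1), Y (a_j=b_j=1).\<close>
definition pauli_labels :: "nat \<Rightarrow> (bool list \<times> bool list) set" where
  "pauli_labels n = {(a, b). length a = n \<and> length b = n}"

text \<open>Matrix entry <w|sigma_(a,b)|z> of the single-qubit Hermitian Pauli matrices.\<close>
definition pauli1 :: "bool \<Rightarrow> bool \<Rightarrow> bool \<Rightarrow> bool \<Rightarrow> complex" where
  "pauli1 a b w z =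
     (if \<not> a \<and> \<not> b then (if w = z then 1 else 0)
      else if a \<and> \<not> b then (if w \<noteq> z then 1 else 0)
      else if \<not> a \<and> b then (if w = z then (if z then -1 else 1) else 0)
      else (if w \<noteq> z then (if w then \<i> else - \<i>) else 0))"

definition pauli_entry :: "nat \<Rightarrow> bool list \<times> bool list \<Rightarrow> bool list \<Rightarrow> bool list \<Rightarrow> complex" where
  "pauli_entry n x w z = (\<Prod>j<n. pauli1 (fst x ! j) (snd x ! j) (w ! j) (z ! j))"

definition pure_state :: "nat \<Rightarrow> (bool list \<Rightarrow> complex) \<Rightarrow> bool" where
  "pure_state n \<psi> \<longleftrightarrow> (\<Sum>z\<in>basis n. (cmod (\<psi> z))\<^sup>2) = 1"

text \<open>alpha_rho(x) = tr(rho P_x) = <psi|P_x|psi> (a real number since P_x is Hermitian).\<close>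
definition alpha :: "nat \<Rightarrow> (bool list \<Rightarrow> complex) \<Rightarrow> bool list \<times> bool list \<Rightarrow> real" where
  "alpha n \<psi> x = Re (\<Sum>w\<in>basis n. \<Sum>z\<in>basis n. cnj (\<psi> w) * pauli_entry n x w z * \<psi> z)"

text \<open>tr(rho sigma) = |<psi|phi>|^2 for pure states.\<close>
definition overlap :: "nat \<Rightarrow> (bool list \<Rightarrow> complex) \<Rightarrow> (bool list \<Rightarrow> complex) \<Rightarrow> real" where
  "overlap n \<psi> \<phi> = (cmod (\<Sum>z\<in>basis n. cnj (\<psi> z) * \<phi> z))\<^sup>2"

definition pauli_dist :: "nat \<Rightarrow> (bool list \<Rightarrow> complex) \<Rightarrow> bool list \<times> bool list \<Rightarrow> real" where
  "pauli_dist n \<psi> x = (alpha n \<psi> x)\<^sup>2 / 2 ^ n"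

definition p_mix :: "nat \<Rightarrow> (bool list \<Rightarrow> complex) \<Rightarrow> (bool list \<Rightarrow> complex) \<Rightarrow> bool list \<times> bool list \<Rightarrow> real" where
  "p_mix n \<psi> \<phi> x = (pauli_dist n \<psi> x + pauli_dist n \<phi> x) / 2"

definition tv_dist :: "nat \<Rightarrow> (bool list \<times> bool list \<Rightarrow> real) \<Rightarrow> (bool list \<times> bool list) pmf \<Rightarrow> real" where
  "tv_dist n p q = (\<Sum>x\<in>pauli_labels n. \<bar>p x - pmf q x\<bar>) / 2"

definition cdf :: "nat \<Rightarrow> (bool list \<Rightarrow> complex) \<Rightarrow> real \<Rightarrow> real" where
  "cdf n \<psi> \<tau> = (\<Sum>x\<in>{x\<in>pauli_labels n. (alpha n \<psi> x)\<^sup>2 < \<tau>}. pauli_dist n \<psi> x)"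

definition G :: "real \<Rightarrow> real \<Rightarrow> real \<Rightarrow> real" where
  "G g0 u v = (if u = 0 \<and> v = 0 then g0 else (1/2) * (u + v)\<^sup>2 / (u\<^sup>2 + v\<^sup>2))"

text \<open>Outcome of measuring P_x on psi: True encodes +1, which has probability (1+alpha)/2.\<close>
definition measure_outcome :: "nat \<Rightarrow> (bool list \<Rightarrow> complex) \<Rightarrow> bool list \<times> bool list \<Rightarrow> bool pmf" where
  "measure_outcome n \<psi> x = bernoulli_pmf ((1 + alpha n \<psi> x) / 2)"

text \<open>Joint distribution of the data of the symmetric protocol: for each i < N1 a label x_i
  drawn from ptilde, and N2 independent outcomes on fresh copies of rho and of sigma.\<close>
definition protocol_pmf ::
  "nat \<Rightarrow> (bool list \<Rightarrow> complex) \<Rightarrow> (bool list \<Rightarrow> complex) \<Rightarrow> (bool list \<times> bool list) pmf \<Rightarrow> nat \<Rightarrow> nat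
   \<Rightarrow> (nat \<Rightarrow> (bool list \<times> bool list) \<times> (nat \<Rightarrow> bool) \<times> (nat \<Rightarrow> bool)) pmf" where
  "protocol_pmf n \<psi> \<phi> pt N1 N2 =
     Pi_pmf {..<N1} undefined (\<lambda>_.
       do { x \<leftarrow> pt;
            r \<leftarrow> Pi_pmf {..<N2} False (\<lambda>_. measure_outcome n \<psi> x);
            s \<leftarrow> Pi_pmf {..<N2} False (\<lambda>_. measure_outcome n \<phi> x);
            return_pmf (x, r, s) })"

definition emp_mean :: "nat \<Rightarrow> (nat \<Rightarrow> bool) \<Rightarrow> real" where
  "emp_mean N2 r = (\<Sum>j<N2. if r j then 1 else -1) / real N2"

definition estimator ::
  "real \<Rightarrow> nat \<Rightarrow> nat \<Rightarrow> (nat \<Rightarrow> (bool list \<times> bool list) \<times> (nat \<Rightarrow> bool) \<times> (nat \<Rightarrow> bool)) \<Rightarrow> real" where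
  "estimator g0 N1 N2 \<omega> =
     (\<Sum>i<N1. G g0 (emp_mean N2 (fst (snd (\<omega> i)))) (emp_mean N2 (snd (snd (\<omega> i))))) / real N1"

end

theory Submission
  imports Defs
begin


lemma hoeffding_Pi_pmf:
  fixes p :: "'a pmf" and g :: "'a \<Rightarrow> real"
  assumes N: "N > 0" and ab: "a < b" and rng: "\<And>x. x \<in> set_pmf p \<Longrightarrow> g x \<in> {a..b}"
    and eps: "\<epsilon> \<ge> 0"
  shows "measure_pmf.prob (Pi_pmf {..<N} d (\<lambda>_. p))
           {\<omega>. \<epsilon> \<le> \<bar>(\<Sum>i<N. g (\<omega> i)) / real N - measure_pmf.expectation p g\<bar>}
         \<le> 2 * exp (-2 * real N * \<epsilon>\<^sup>2 / (b - a)\<^sup>2)"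
proof -
  define M where "M = Pi_pmf {..<N} d (\<lambda>_. p)"
  have comp: "map_pmf (\<lambda>f. f i) M = p" if "i < N" for i
    using that by (simp add: M_def Pi_pmf_component)
  have distr: "distr (measure_pmf M) borel (\<lambda>\<omega>. g (\<omega> i)) = distr (measure_pmf p) borel g"
    if "i < N" for i
  proof -
    have "distr (measure_pmf M) borel (\<lambda>\<omega>. g (\<omega> i)) =
          distr (measure_pmf (map_pmf (\<lambda>f. f i) M)) borel g"
      unfolding map_pmf_rep_eq by (subst distr_distr) (auto simp: o_def)
    then show ?thesis using comp[OF that] by simp
  qed
  have exp0: "measure_pmf.expectation M (\<lambda>\<omega>. g (\<omega> 0)) = measure_pmf.expectation p g"
  proof -
    have "measure_pmf.expectation M (\<lambda>\<omega>. g (\<omega> 0)) =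
          measure_pmf.expectation (map_pmf (\<lambda>f. f 0) M) g" by simp
    then show ?thesis using comp[of 0] N by simp
  qed
  interpret H: Hoeffding_ineq_iid M "{..<N}" "\<lambda>i \<omega>. g (\<omega> i)" "\<lambda>\<omega>. g (\<omega> 0)" a b
     "measure_pmf.expectation M (\<lambda>\<omega>. g (\<omega> 0))"
  proof unfold_locales
    show "prob_space.indep_vars (measure_pmf M) (\<lambda>_. borel) (\<lambda>i \<omega>. g (\<omega> i)) {..<N}"
      unfolding M_def
      by (intro prob_space.indep_vars_compose2[OF _ indep_vars_Pi_pmf])
         (auto simp: measure_pmf.prob_space_axioms)
  next
    show "AE x in measure_pmf M. g (x 0) \<in> {a..b}"
    proof (subst AE_measure_pmf_iff, intro ballI)
      fix \<omega> assume "\<omega> \<in> set_pmf M"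
      then have "\<omega> 0 \<in> set_pmf (map_pmf (\<lambda>f. f 0) M)" by simp
      then show "g (\<omega> 0) \<in> {a..b}" using comp[of 0] N rng by simp
    qed
  qed (auto simp: distr)
  have "measure_pmf.prob M {x\<in>space M. \<bar>(\<Sum>i\<in>{..<N}. g (x i)) / real (card {..<N}) - measure_pmf.expectation M (\<lambda>\<omega>. g (\<omega> 0))\<bar> \<ge> \<epsilon>} \<le>
               2 * exp (-2 * real (card {..<N}) * \<epsilon>\<^sup>2 / (b - a)\<^sup>2)"
    by (rule H.Hoeffding_ineq_abs_ge'[OF eps ab]) (use N in auto)
  then show ?thesis using exp0 by (simp add: M_def)
qed



lemma sum_lists_prod:
  fixes f :: "nat \<Rightarrow> bool \<Rightarrow> 'b::comm_semiring_1"
  shows "(\<Sum>xs\<in>{xs. length xs = n}. \<Prod>j<n. f j (xs!j)) = (\<Prod>j<n. f j True + f j False)"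
proof (induction n arbitrary: f)
  case 0
  then show ?case by simp
next
  case (Suc n)
  have eq: "{xs::bool list. length xs = Suc n} = (\<lambda>(x,xs). x # xs) ` (UNIV \<times> {xs. length xs = n})"
    by (auto simp: image_iff length_Suc_conv)
  have inj: "inj_on (\<lambda>(x::bool,xs). x # xs) (UNIV \<times> {xs. length xs = n})"
    by (auto simp: inj_on_def)
  have fin: "finite {xs::bool list. length xs = n}"
    using finite_lists_length_eq[of "UNIV::bool set" n] by simp
  have "(\<Sum>xs\<in>{xs. length xs = Suc n}. \<Prod>j<Suc n. f j (xs!j))
      = (\<Sum>(x,xs)\<in>UNIV \<times> {xs. length xs = n}. \<Prod>j<Suc n. f j ((x#xs)!j))"
    unfolding eq by (subst sum.reindex[OF inj]) (simp add: case_prod_unfold)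
  also have "\<dots> = (\<Sum>x\<in>UNIV. \<Sum>xs\<in>{xs. length xs = n}. f 0 x * (\<Prod>j<n. f (Suc j) (xs!j)))"
    by (subst sum.cartesian_product[symmetric]) (simp del: prod.lessThan_Suc add: prod.lessThan_Suc_shift)
  also have "\<dots> = (\<Sum>x\<in>UNIV. f 0 x * (\<Sum>xs\<in>{xs. length xs = n}. (\<Prod>j<n. f (Suc j) (xs!j))))"
    by (simp add: sum_distrib_left)
  also have "\<dots> = (\<Sum>x\<in>UNIV. f 0 x * (\<Prod>j<n. f (Suc j) True + f (Suc j) False))"
    using Suc.IH[of "\<lambda>j. f (Suc j)"] by simp
  also have "\<dots> = (\<Prod>j<Suc n. f j True + f j False)"
    by (simp del: prod.lessThan_Suc add: prod.lessThan_Suc_shift UNIV_bool algebra_simps)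
  finally show ?case .
qed

lemma finite_basis [simp]: "finite (basis n)"
  using finite_lists_length_eq[of "UNIV::bool set" n] by (simp add: basis_def)

lemma pauli_labels_eq: "pauli_labels n = basis n \<times> basis n"
  by (auto simp: pauli_labels_def basis_def)

lemma finite_pauli_labels [simp]: "finite (pauli_labels n)"
  by (simp add: pauli_labels_eq)

lemma pauli1_complete:
  "pauli1 True True w z * cnj (pauli1 True True w' z') + pauli1 True False w z * cnj (pauli1 True False w' z')
   + (pauli1 False True w z * cnj (pauli1 False True w' z') + pauli1 False False w z * cnj (pauli1 False False w' z'))
   = (if w = w' \<and> z = z' then 2 else 0)"
  by (cases w; cases z; cases w'; cases z') (simp_all add: pauli1_def)

lemma pauli1_unitary:
  "pauli1 a b True z * cnj (pauli1 a b True z') + pauli1 a b False z * cnj (pauli1 a b False z')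
   = (if z = z' then 1 else 0)"
  by (cases a; cases b; cases z; cases z') (simp_all add: pauli1_def)

lemma pauli1_herm: "cnj (pauli1 a b w z) = pauli1 a b z w"
  by (cases a; cases b; cases z; cases w) (simp_all add: pauli1_def)

lemma pauli_herm: "cnj (pauli_entry n x w z) = pauli_entry n x z w"
  by (simp add: pauli_entry_def pauli1_herm)

lemma prod_if_eq:
  fixes P :: "nat \<Rightarrow> bool"
  shows "(\<Prod>j<n. if P j then (c::complex) else 0) = (if \<forall>j<n. P j then c ^ n else 0)"
  by (induction n) (auto simp: less_Suc_eq)

lemma list_eq_nth: "length w = n \<Longrightarrow> length w' = n \<Longrightarrow> (\<forall>j<n. w!j = w'!j) = (w = w')"
  by (auto simp: list_eq_iff_nth_eq)

lemma pauli_complete: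
  assumes "w \<in> basis n" "z \<in> basis n" "w' \<in> basis n" "z' \<in> basis n"
  shows "(\<Sum>x\<in>pauli_labels n. pauli_entry n x w z * cnj (pauli_entry n x w' z'))
         = (if w = w' \<and> z = z' then 2 ^ n else 0)"
proof -
  define h where "h j aa bb = pauli1 aa bb (w!j) (z!j) * cnj (pauli1 aa bb (w'!j) (z'!j))" for j aa bb
  have "(\<Sum>x\<in>pauli_labels n. pauli_entry n x w z * cnj (pauli_entry n x w' z'))
      = (\<Sum>a\<in>basis n. \<Sum>b\<in>basis n. \<Prod>j<n. h j (a!j) (b!j))"
  proof -
    have "pauli_entry n x w z * cnj (pauli_entry n x w' z') = (\<Prod>j<n. h j (fst x!j) (snd x!j))" for x
      by (simp add: pauli_entry_def h_def prod.distrib[symmetric])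
    then show ?thesis unfolding pauli_labels_eq by (simp add: sum.cartesian_product case_prod_unfold)
  qed
  also have "\<dots> = (\<Sum>a\<in>basis n. \<Prod>j<n. h j (a!j) True + h j (a!j) False)"
    unfolding basis_def by (intro sum.cong refl sum_lists_prod)
  also have "\<dots> = (\<Prod>j<n. (h j True True + h j True False) + (h j False True + h j False False))"
    unfolding basis_def by (rule sum_lists_prod)
  also have "\<dots> = (\<Prod>j<n. if w!j = w'!j \<and> z!j = z'!j then 2 else 0)"
    unfolding h_def by (simp only: pauli1_complete)
  also have "\<dots> = (if w = w' \<and> z = z' then 2 ^ n else 0)"
    using assms by (simp add: prod_if_eq basis_def list_eq_nth[symmetric] all_conj_distrib)
  finally show ?thesis .
qed

lemma pauli_unitary:
  assumes "z \<in> basis n" "z' \<in> basis n" 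
  shows "(\<Sum>w\<in>basis n. pauli_entry n x w z * cnj (pauli_entry n x w z'))
         = (if z = z' then 1 else 0)"
proof -
  define h where "h j ww = pauli1 (fst x!j) (snd x!j) ww (z!j) * cnj (pauli1 (fst x!j) (snd x!j) ww (z'!j))" for j ww
  have "(\<Sum>w\<in>basis n. pauli_entry n x w z * cnj (pauli_entry n x w z'))
      = (\<Sum>w\<in>basis n. \<Prod>j<n. h j (w!j))"
    by (simp add: pauli_entry_def h_def prod.distrib[symmetric])
  also have "\<dots> = (\<Prod>j<n. h j True + h j False)"
    unfolding basis_def by (rule sum_lists_prod)
  also have "\<dots> = (\<Prod>j<n. if z!j = z'!j then 1 else 0)"
    unfolding h_def by (simp only: pauli1_unitary)
  also have "\<dots> = (if z = z' then 1 else 0)"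
    using assms prod_if_eq[of "\<lambda>j. z!j = z'!j" 1 n] by (simp add: basis_def list_eq_nth)
  finally show ?thesis .
qed



definition amp :: "nat \<Rightarrow> (bool list \<Rightarrow> complex) \<Rightarrow> bool list \<times> bool list \<Rightarrow> complex" where
  "amp n \<psi> x = (\<Sum>w\<in>basis n. \<Sum>z\<in>basis n. cnj (\<psi> w) * pauli_entry n x w z * \<psi> z)"

lemma amp_real: "cnj (amp n \<psi> x) = amp n \<psi> x"
proof -
  have "cnj (amp n \<psi> x) = (\<Sum>w\<in>basis n. \<Sum>z\<in>basis n. \<psi> w * pauli_entry n x z w * cnj (\<psi> z))"
    by (simp add: amp_def cnj_sum pauli_herm)
  also have "\<dots> = (\<Sum>z\<in>basis n. \<Sum>w\<in>basis n. \<psi> w * pauli_entry n x z w * cnj (\<psi> z))"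
    by (rule sum.swap)
  also have "\<dots> = amp n \<psi> x"
    by (simp add: amp_def mult_ac)
  finally show ?thesis .
qed

lemma alpha_amp: "complex_of_real (alpha n \<psi> x) = amp n \<psi> x"
proof -
  have "Im (amp n \<psi> x) = 0" using amp_real[of n \<psi> x]
    by (metis complex_cnj_cancel_iff complex_cnj_zero_iff diff_self Im_complex_of_real cnj.simps(2) neg_equal_zero)
  then show ?thesis
    by (simp add: alpha_def amp_def[symmetric] complex_eq_iff)
qed

lemma alpha_prod_sum:
  "(\<Sum>x\<in>pauli_labels n. alpha n \<psi> x * alpha n \<phi> x) = 2 ^ n * overlap n \<psi> \<phi>"
proof -
  let ?B = "basis n" and ?PL = "pauli_labels n"
  define c where "c w w' z z' = cnj (\<psi> w) * \<psi> z * \<phi> w' * cnj (\<phi> z')" for w w' z z'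
  have 1: "amp n \<psi> x * cnj (amp n \<phi> x) =
     (\<Sum>w\<in>?B. \<Sum>w'\<in>?B. \<Sum>z\<in>?B. \<Sum>z'\<in>?B. c w w' z z' * (pauli_entry n x w z * cnj (pauli_entry n x w' z')))" for x
  proof -
    have "amp n \<psi> x * cnj (amp n \<phi> x) = (\<Sum>w\<in>?B. \<Sum>z\<in>?B. cnj (\<psi> w) * pauli_entry n x w z * \<psi> z)
       * (\<Sum>w'\<in>?B. \<Sum>z'\<in>?B. \<phi> w' * cnj (pauli_entry n x w' z') * cnj (\<phi> z'))"
      by (simp add: amp_def cnj_sum)
    also have "\<dots> = (\<Sum>w\<in>?B. \<Sum>w'\<in>?B. \<Sum>z\<in>?B. \<Sum>z'\<in>?B. (cnj (\<psi> w) * pauli_entry n x w z * \<psi> z) *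
          (\<phi> w' * cnj (pauli_entry n x w' z') * cnj (\<phi> z')))"
      by (simp only: sum_product)
    finally show ?thesis by (simp add: c_def mult_ac)
  qed
  have "complex_of_real (\<Sum>x\<in>?PL. alpha n \<psi> x * alpha n \<phi> x) = (\<Sum>x\<in>?PL. amp n \<psi> x * cnj (amp n \<phi> x))"
    by (simp add: alpha_amp[symmetric])
  also have "\<dots> = (\<Sum>x\<in>?PL. \<Sum>w\<in>?B. \<Sum>w'\<in>?B. \<Sum>z\<in>?B. \<Sum>z'\<in>?B. c w w' z z' * (pauli_entry n x w z * cnj (pauli_entry n x w' z')))"
    by (simp only: 1)
  also have "\<dots> = (\<Sum>w\<in>?B. \<Sum>w'\<in>?B. \<Sum>z\<in>?B. \<Sum>z'\<in>?B. \<Sum>x\<in>?PL. c w w' z z' * (pauli_entry n x w z * cnj (pauli_entry n x w' z')))"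
    by (simp only: sum.swap[of _ ?PL])
  also have "\<dots> = (\<Sum>w\<in>?B. \<Sum>w'\<in>?B. \<Sum>z\<in>?B. \<Sum>z'\<in>?B. c w w' z z' * (if w = w' \<and> z = z' then 2 ^ n else 0))"
    by (intro sum.cong refl) (simp add: sum_distrib_left[symmetric] pauli_complete)
  also have "\<dots> = (\<Sum>w\<in>?B. \<Sum>z\<in>?B. c w w z z * 2 ^ n)"
  proof (rule sum.cong[OF refl])
    fix w assume w: "w \<in> ?B"
    have "(\<Sum>w'\<in>?B. \<Sum>z\<in>?B. \<Sum>z'\<in>?B. c w w' z z' * (if w = w' \<and> z = z' then 2 ^ n else 0))
        = (\<Sum>w'\<in>?B. if w = w' then (\<Sum>z\<in>?B. \<Sum>z'\<in>?B. c w w' z z' * (if z = z' then 2 ^ n else 0)) else 0)"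
      by (intro sum.cong refl) auto
    also have "\<dots> = (\<Sum>z\<in>?B. \<Sum>z'\<in>?B. c w w z z' * (if z = z' then 2 ^ n else 0))"
      using w by (simp only: sum.delta sum.delta' finite_basis if_True)
    also have "\<dots> = (\<Sum>z\<in>?B. \<Sum>z'\<in>?B. if z = z' then c w w z z' * 2 ^ n else 0)"
      by (intro sum.cong refl) auto
    also have "\<dots> = (\<Sum>z\<in>?B. c w w z z * 2 ^ n)"
      by (intro sum.cong refl) (simp only: sum.delta sum.delta' finite_basis if_True)
    finally show "(\<Sum>w'\<in>?B. \<Sum>z\<in>?B. \<Sum>z'\<in>?B. c w w' z z' * (if w = w' \<and> z = z' then 2 ^ n else 0)) = (\<Sum>z\<in>?B. c w w z z * 2 ^ n)" .
  qed
  also have "\<dots> = 2 ^ n * ((\<Sum>w\<in>?B. cnj (\<psi> w) * \<phi> w) * (\<Sum>z\<in>?B. \<psi> z * cnj (\<phi> z)))"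
  proof -
    have e1: "c w w z z * 2 ^ n = 2 ^ n * (cnj (\<psi> w) * \<phi> w * (\<psi> z * cnj (\<phi> z)))" for w z
      by (simp add: c_def mult_ac)
    show ?thesis by (simp only: e1, subst sum_product, simp only: sum_distrib_left)
  qed
  also have "\<dots> = 2 ^ n * ((\<Sum>w\<in>?B. cnj (\<psi> w) * \<phi> w) * cnj (\<Sum>z\<in>?B. cnj (\<psi> z) * \<phi> z))"
    by (simp add: cnj_sum)
  also have "\<dots> = complex_of_real (2 ^ n * overlap n \<psi> \<phi>)"
    unfolding overlap_def of_real_mult complex_norm_square by simp
  finally show ?thesis by (simp only: of_real_eq_iff)
qed

lemma alpha_sq_sum:
  assumes "pure_state n \<psi>"
  shows "(\<Sum>x\<in>pauli_labels n. (alpha n \<psi> x)\<^sup>2) = 2 ^ n"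
proof -
  have "overlap n \<psi> \<psi> = 1"
  proof -
    have "(\<Sum>z\<in>basis n. cnj (\<psi> z) * \<psi> z) = complex_of_real (\<Sum>z\<in>basis n. (cmod (\<psi> z))\<^sup>2)"
    proof -
      have "cnj (\<psi> z) * \<psi> z = complex_of_real ((cmod (\<psi> z))\<^sup>2)" for z
        by (simp only: complex_norm_square mult.commute)
      then show ?thesis by (simp only: of_real_sum)
    qed
    also have "\<dots> = 1" by (simp only: assms[unfolded pure_state_def] of_real_1)
    finally show ?thesis by (simp add: overlap_def)
  qed
  then show ?thesis using alpha_prod_sum[of n \<psi> \<psi>] by (simp add: power2_eq_square)
qed



lemma y_norm:
  assumes "pure_state n \<psi>"
  shows "(\<Sum>w\<in>basis n. (cmod (\<Sum>z\<in>basis n. pauli_entry n x w z * \<psi> z))\<^sup>2) = 1"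
proof -
  let ?B = "basis n"
  have "complex_of_real (\<Sum>w\<in>?B. (cmod (\<Sum>z\<in>?B. pauli_entry n x w z * \<psi> z))\<^sup>2)
      = (\<Sum>w\<in>?B. (\<Sum>z\<in>?B. pauli_entry n x w z * \<psi> z) * cnj (\<Sum>z'\<in>?B. pauli_entry n x w z' * \<psi> z'))"
    by (simp only: of_real_sum complex_norm_square)
  also have "\<dots> = (\<Sum>w\<in>?B. \<Sum>z\<in>?B. \<Sum>z'\<in>?B. (\<psi> z * cnj (\<psi> z')) * (pauli_entry n x w z * cnj (pauli_entry n x w z')))"
    by (simp only: cnj_sum sum_product) (simp add: mult_ac)
  also have "\<dots> = (\<Sum>z\<in>?B. \<Sum>z'\<in>?B. \<Sum>w\<in>?B. (\<psi> z * cnj (\<psi> z')) * (pauli_entry n x w z * cnj (pauli_entry n x w z')))"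
  proof -
    have "(\<Sum>w\<in>?B. \<Sum>z\<in>?B. \<Sum>z'\<in>?B. (\<psi> z * cnj (\<psi> z')) * (pauli_entry n x w z * cnj (pauli_entry n x w z')))
        = (\<Sum>z\<in>?B. \<Sum>w\<in>?B. \<Sum>z'\<in>?B. (\<psi> z * cnj (\<psi> z')) * (pauli_entry n x w z * cnj (pauli_entry n x w z')))"
      by (rule sum.swap)
    also have "\<dots> = (\<Sum>z\<in>?B. \<Sum>z'\<in>?B. \<Sum>w\<in>?B. (\<psi> z * cnj (\<psi> z')) * (pauli_entry n x w z * cnj (pauli_entry n x w z')))"
      by (rule sum.cong[OF refl], rule sum.swap)
    finally show ?thesis .
  qed
  also have "\<dots> = (\<Sum>z\<in>?B. \<Sum>z'\<in>?B. if z = z' then \<psi> z * cnj (\<psi> z') else 0)"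
    by (intro sum.cong refl) (simp add: sum_distrib_left[symmetric] pauli_unitary)
  also have "\<dots> = (\<Sum>z\<in>?B. \<psi> z * cnj (\<psi> z))"
    by (intro sum.cong refl) simp
  also have "\<dots> = complex_of_real (\<Sum>z\<in>?B. (cmod (\<psi> z))\<^sup>2)"
    by (simp only: of_real_sum complex_norm_square)
  also have "\<dots> = 1" by (simp only: assms[unfolded pure_state_def] of_real_1)
  finally show ?thesis by (simp only: of_real_eq_1_iff)
qed

lemma abs_alpha_le:
  assumes "pure_state n \<psi>"
  shows "\<bar>alpha n \<psi> x\<bar> \<le> 1"
proof -
  let ?B = "basis n"
  define y where "y w = (\<Sum>z\<in>?B. pauli_entry n x w z * \<psi> z)" for w
  have "amp n \<psi> x = (\<Sum>w\<in>?B. cnj (\<psi> w) * y w)"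
    by (simp add: amp_def y_def sum_distrib_left mult_ac)
  then have "\<bar>alpha n \<psi> x\<bar> = cmod (\<Sum>w\<in>?B. cnj (\<psi> w) * y w)"
    using alpha_amp[of n \<psi> x] by (metis norm_of_real)
  also have "\<dots> \<le> (\<Sum>w\<in>?B. cmod (cnj (\<psi> w) * y w))"
    by (rule norm_sum)
  also have "\<dots> = (\<Sum>w\<in>?B. \<bar>cmod (\<psi> w)\<bar> * \<bar>cmod (y w)\<bar>)"
    by (simp add: norm_mult)
  also have "\<dots> \<le> L2_set (\<lambda>w. cmod (\<psi> w)) ?B * L2_set (\<lambda>w. cmod (y w)) ?B"
    by (rule L2_set_mult_ineq)
  also have "\<dots> = 1"
    using assms y_norm[OF assms, of x] unfolding L2_set_def pure_state_def y_def by simp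
  finally show ?thesis .
qed



lemma G_range:
  assumes "0 \<le> g0" "g0 \<le> 1"
  shows "0 \<le> G g0 u v \<and> G g0 u v \<le> 1"
proof (cases "u = 0 \<and> v = 0")
  case True then show ?thesis using assms by (simp add: G_def)
next
  case False
  then have S: "u\<^sup>2 + v\<^sup>2 > 0" by (simp add: sum_power2_gt_zero_iff)
  have "(u + v)\<^sup>2 \<le> 2 * (u\<^sup>2 + v\<^sup>2)"
    using sum_squares_ge_zero[of "u - v" 0] by (simp add: power2_eq_square algebra_simps)
  then have "(1/2) * (u + v)\<^sup>2 / (u\<^sup>2 + v\<^sup>2) \<le> 1"
    using S by (simp add: divide_le_eq)
  then show ?thesis using False S assms by (simp add: G_def)
qed

lemma G_close:
  assumes g0: "0 \<le> g0" "g0 \<le> 1" and e: "e > 0"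
    and du: "\<bar>u - a\<bar> \<le> e" and dv: "\<bar>v - b\<bar> \<le> e" and nb: "\<not> (a\<^sup>2 < e \<and> b\<^sup>2 < e)"
  shows "\<bar>G g0 u v - G g0 a b\<bar> \<le> 2 * sqrt e"
proof -
  have R0: "a\<^sup>2 + b\<^sup>2 \<ge> e" using nb by (auto simp: not_less add_increasing add_increasing2)
  have R: "a\<^sup>2 + b\<^sup>2 > 0" using R0 e by linarith
  have rng: "\<bar>G g0 u v - G g0 a b\<bar> \<le> 1" using G_range[OF g0, of u v] G_range[OF g0, of a b] by linarith
  show ?thesis
  proof (cases "u = 0 \<and> v = 0")
    case True
    have "a\<^sup>2 \<le> e\<^sup>2" "b\<^sup>2 \<le> e\<^sup>2" using du dv True
      by (simp_all add: abs_le_square_iff[symmetric] power2_abs) 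
    then have "e \<le> e\<^sup>2" using nb by auto
    then have "1 \<le> e" using e by (simp add: power2_eq_square)
    then have "1 \<le> sqrt e" by simp
    then show ?thesis using rng by linarith
  next
    case False
    then have S: "u\<^sup>2 + v\<^sup>2 > 0" by (simp add: sum_power2_gt_zero_iff)
    have ab0: "\<not> (a = 0 \<and> b = 0)" using R by auto
    define Sv where "Sv = u\<^sup>2 + v\<^sup>2"
    define Rv where "Rv = a\<^sup>2 + b\<^sup>2"
    define c where "c = u * b - v * a"
    define k where "k = v * b - u * a"
    define D where "D = (u - a)\<^sup>2 + (v - b)\<^sup>2"
    have SvR: "Sv > 0" "Rv > 0" using S R by (simp_all add: Sv_def Rv_def)
    have Gu: "G g0 u v = 1/2 + u * v / Sv"
    proof -
      have "(u + v)\<^sup>2 = Sv + 2 * (u * v)" by (simp add: Sv_def power2_eq_square algebra_simps)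
      then have "G g0 u v = (1/2) * (Sv + 2 * (u * v)) / Sv" by (simp only: G_def if_not_P[OF False] Sv_def)
      also have "\<dots> = 1/2 + u * v / Sv" using SvR by (simp add: field_simps)
      finally show ?thesis .
    qed
    have Ga: "G g0 a b = 1/2 + a * b / Rv"
    proof -
      have "(a + b)\<^sup>2 = Rv + 2 * (a * b)" by (simp add: Rv_def power2_eq_square algebra_simps)
      then have "G g0 a b = (1/2) * (Rv + 2 * (a * b)) / Rv" by (simp only: G_def if_not_P[OF ab0] Rv_def)
      also have "\<dots> = 1/2 + a * b / Rv" using SvR by (simp add: field_simps)
      finally show ?thesis .
    qed
    have diff: "G g0 u v - G g0 a b = c * k / (Sv * Rv)"
    proof -
      have "u * v * Rv - a * b * Sv = c * k"
        by (simp add: c_def k_def Sv_def Rv_def power2_eq_square algebra_simps)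
      moreover have "u * v / Sv - a * b / Rv = (u * v * Rv - a * b * Sv) / (Sv * Rv)"
        using SvR by (simp add: field_simps)
      ultimately show ?thesis by (simp add: Gu Ga)
    qed
    have k2: "k\<^sup>2 \<le> Sv * Rv"
    proof -
      have "Sv * Rv = k\<^sup>2 + (u * b + v * a)\<^sup>2"
        by (simp add: Sv_def Rv_def k_def power2_eq_square algebra_simps)
      then show ?thesis by simp
    qed
    have c2: "c\<^sup>2 \<le> Sv * D"
    proof -
      have "Sv * D = c\<^sup>2 + (u * (a - u) + v * (b - v))\<^sup>2"
        by (simp add: Sv_def D_def c_def power2_eq_square algebra_simps)
      then show ?thesis by simp
    qed
    have D: "D \<le> 2 * e\<^sup>2"
    proof -
      have "(u - a)\<^sup>2 \<le> e\<^sup>2" "(v - b)\<^sup>2 \<le> e\<^sup>2" using du dv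
        by (simp_all add: abs_le_square_iff[symmetric] power2_abs)
      then show ?thesis by (simp add: D_def)
    qed
    have "(c * k)\<^sup>2 \<le> (Sv * D) * (Sv * Rv)"
      unfolding power_mult_distrib by (rule mult_mono[OF c2 k2]) (use SvR in \<open>auto simp: D_def\<close>)
    then have "(c * k / (Sv * Rv))\<^sup>2 \<le> (Sv * D) * (Sv * Rv) / (Sv * Rv)\<^sup>2"
      using SvR by (simp add: power_divide divide_right_mono)
    also have "\<dots> = D / Rv" using SvR by (simp add: power2_eq_square field_simps)
    also have "\<dots> \<le> 2 * e\<^sup>2 / e"
      using SvR D R0 e by (intro frac_le) (auto simp: Rv_def)
    also have "\<dots> \<le> (2 * sqrt e)\<^sup>2" using e by (simp add: power2_eq_square power_mult_distrib)
    finally have "(G g0 u v - G g0 a b)\<^sup>2 \<le> (2 * sqrt e)\<^sup>2" by (simp only: diff)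
    then have "sqrt ((G g0 u v - G g0 a b)\<^sup>2) \<le> sqrt ((2 * sqrt e)\<^sup>2)" by (rule real_sqrt_le_mono)
    then show ?thesis using e by (simp only: real_sqrt_abs) simp
  qed
qed



lemma pmix_sum:
  assumes "pure_state n \<psi>" "pure_state n \<phi>"
  shows "(\<Sum>x\<in>pauli_labels n. p_mix n \<psi> \<phi> x) = 1"
proof -
  have "(\<Sum>x\<in>pauli_labels n. p_mix n \<psi> \<phi> x) =
        ((\<Sum>x\<in>pauli_labels n. (alpha n \<psi> x)\<^sup>2) + (\<Sum>x\<in>pauli_labels n. (alpha n \<phi> x)\<^sup>2)) / (2 ^ n * 2)"
    by (simp add: p_mix_def pauli_dist_def sum.distrib sum_divide_distrib add_divide_distrib)
  then show ?thesis using alpha_sq_sum[OF assms(1)] alpha_sq_sum[OF assms(2)] by simp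
qed

lemma pmix_G:
  assumes "pure_state n \<psi>" "pure_state n \<phi>"
  shows "(\<Sum>x\<in>pauli_labels n. p_mix n \<psi> \<phi> x * G g0 (alpha n \<psi> x) (alpha n \<phi> x))
         = (1 + overlap n \<psi> \<phi>) / 2"
proof -
  have pt: "p_mix n \<psi> \<phi> x * G g0 (alpha n \<psi> x) (alpha n \<phi> x)
        = ((alpha n \<psi> x)\<^sup>2 + (alpha n \<phi> x)\<^sup>2 + 2 * (alpha n \<psi> x * alpha n \<phi> x)) / (4 * 2 ^ n)" for x
  proof (cases "alpha n \<psi> x = 0 \<and> alpha n \<phi> x = 0")
    case True then show ?thesis by (simp add: p_mix_def pauli_dist_def)
  next
    case False
    then have S: "(alpha n \<psi> x)\<^sup>2 + (alpha n \<phi> x)\<^sup>2 > 0" by (simp add: sum_power2_gt_zero_iff)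
    have "G g0 (alpha n \<psi> x) (alpha n \<phi> x) = (1/2) * (alpha n \<psi> x + alpha n \<phi> x)\<^sup>2 / ((alpha n \<psi> x)\<^sup>2 + (alpha n \<phi> x)\<^sup>2)"
      by (simp only: G_def if_not_P[OF False])
    moreover have "((u\<^sup>2 / N + v\<^sup>2 / N) / 2) * ((1/2) * (u + v)\<^sup>2 / (u\<^sup>2 + v\<^sup>2)) = (u\<^sup>2 + v\<^sup>2 + 2 * (u * v)) / (4 * N)"
      if "u\<^sup>2 + v\<^sup>2 > 0" "N > 0" for u v N :: real
    proof -
      have a: "(u\<^sup>2 / N + v\<^sup>2 / N) / 2 = (u\<^sup>2 + v\<^sup>2) / (2 * N)" by (simp add: add_divide_distrib)
      have b: "S / (2 * N) * ((1/2) * X / S) = X / (4 * N)" if "S > 0" for S X :: real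
        using that \<open>N > 0\<close> by (simp add: field_simps)
      have c: "(u + v)\<^sup>2 = u\<^sup>2 + v\<^sup>2 + 2 * (u * v)" by (simp add: power2_eq_square algebra_simps)
      show ?thesis by (simp only: a b[OF that(1)] c)
    qed
    ultimately show ?thesis using S
      by (simp add: p_mix_def pauli_dist_def)
  qed
  have "(\<Sum>x\<in>pauli_labels n. p_mix n \<psi> \<phi> x * G g0 (alpha n \<psi> x) (alpha n \<phi> x))
     = ((\<Sum>x\<in>pauli_labels n. (alpha n \<psi> x)\<^sup>2) + (\<Sum>x\<in>pauli_labels n. (alpha n \<phi> x)\<^sup>2)
        + 2 * (\<Sum>x\<in>pauli_labels n. alpha n \<psi> x * alpha n \<phi> x)) / (4 * 2 ^ n)"
    by (simp only: pt sum_divide_distrib[symmetric] sum.distrib sum_distrib_left)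
  also have "\<dots> = (1 + overlap n \<psi> \<phi>) / 2"
    using alpha_prod_sum[of n \<psi> \<phi>] by (simp add: alpha_sq_sum[OF assms(1)] alpha_sq_sum[OF assms(2)] field_simps)
  finally show ?thesis .
qed

lemma tv_bound:
  assumes sp: "set_pmf pt \<subseteq> pauli_labels n"
    and s1: "(\<Sum>x\<in>pauli_labels n. p x) = 1"
    and h: "\<And>x. x \<in> pauli_labels n \<Longrightarrow> 0 \<le> h x \<and> h x \<le> 1"
  shows "\<bar>(\<Sum>x\<in>pauli_labels n. pmf pt x * h x) - (\<Sum>x\<in>pauli_labels n. p x * h x)\<bar> \<le> tv_dist n p pt"
proof -
  let ?PL = "pauli_labels n"
  have q1: "(\<Sum>x\<in>?PL. pmf pt x) = 1" by (rule sum_pmf_eq_1[OF finite_pauli_labels sp])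
  have t: "pmf pt x * h x - p x * h x = (pmf pt x - p x) * (h x - 1/2) + (pmf pt x - p x) / 2" for x
    by (simp add: field_simps)
  have "(\<Sum>x\<in>?PL. pmf pt x * h x) - (\<Sum>x\<in>?PL. p x * h x)
      = (\<Sum>x\<in>?PL. (pmf pt x - p x) * (h x - 1/2)) + ((\<Sum>x\<in>?PL. pmf pt x) - (\<Sum>x\<in>?PL. p x)) / 2"
    by (simp only: sum_subtractf[symmetric] t sum.distrib sum_divide_distrib)
  also have "\<dots> = (\<Sum>x\<in>?PL. (pmf pt x - p x) * (h x - 1/2))" using q1 s1 by simp
  finally have eq: "(\<Sum>x\<in>?PL. pmf pt x * h x) - (\<Sum>x\<in>?PL. p x * h x) = (\<Sum>x\<in>?PL. (pmf pt x - p x) * (h x - 1/2))" .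
  have "\<bar>\<Sum>x\<in>?PL. (pmf pt x - p x) * (h x - 1/2)\<bar> \<le> (\<Sum>x\<in>?PL. \<bar>(pmf pt x - p x) * (h x - 1/2)\<bar>)"
    by (rule sum_abs)
  also have "\<dots> \<le> (\<Sum>x\<in>?PL. \<bar>p x - pmf pt x\<bar> / 2)"
  proof (rule sum_mono)
    fix x assume xin: "x \<in> ?PL"
    have "\<bar>h x - 1/2\<bar> \<le> 1/2" using h[OF xin] unfolding abs_le_iff by linarith
    then have "\<bar>pmf pt x - p x\<bar> * \<bar>h x - 1/2\<bar> \<le> \<bar>pmf pt x - p x\<bar> * (1/2)"
      by (intro mult_left_mono) auto
    then show "\<bar>(pmf pt x - p x) * (h x - 1/2)\<bar> \<le> \<bar>p x - pmf pt x\<bar> / 2"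
      by (simp add: abs_mult abs_minus_commute)
  qed
  also have "\<dots> = tv_dist n p pt" by (simp add: tv_dist_def sum_divide_distrib)
  finally show ?thesis using eq by simp
qed

lemma bad_bound:
  "(\<Sum>x\<in>pauli_labels n. p_mix n \<psi> \<phi> x * (if (alpha n \<psi> x)\<^sup>2 < e \<and> (alpha n \<phi> x)\<^sup>2 < e then 1 else 0))
   \<le> cdf n \<psi> e / 2 + cdf n \<phi> e / 2"
proof -
  let ?PL = "pauli_labels n"
  have "(\<Sum>x\<in>?PL. p_mix n \<psi> \<phi> x * (if (alpha n \<psi> x)\<^sup>2 < e \<and> (alpha n \<phi> x)\<^sup>2 < e then 1 else 0))
     \<le> (\<Sum>x\<in>?PL. (if (alpha n \<psi> x)\<^sup>2 < e then pauli_dist n \<psi> x else 0) / 2 + (if (alpha n \<phi> x)\<^sup>2 < e then pauli_dist n \<phi> x else 0) / 2)"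
    by (intro sum_mono) (auto simp: p_mix_def pauli_dist_def)
  also have "\<dots> = cdf n \<psi> e / 2 + cdf n \<phi> e / 2"
    by (simp add: cdf_def sum.distrib sum_divide_distrib[symmetric] sum.inter_filter)
  finally show ?thesis .
qed



lemma prob_bind_le:
  assumes "\<And>x. x \<in> set_pmf p \<Longrightarrow> measure_pmf.prob (f x) A \<le> c"
  shows "measure_pmf.prob (bind_pmf p f) A \<le> c"
proof -
  obtain x0 where "x0 \<in> set_pmf p" using set_pmf_not_empty[of p] by blast
  then have c0: "c \<ge> 0" using assms[of x0] measure_nonneg[of "measure_pmf (f x0)" A] by linarith
  have "ennreal (measure_pmf.prob (bind_pmf p f) A) = emeasure (measure_pmf (bind_pmf p f)) A"
    by (simp add: measure_pmf.emeasure_eq_measure)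
  also have "\<dots> = (\<integral>\<^sup>+x. emeasure (measure_pmf (f x)) A \<partial>measure_pmf p)"
    by simp
  also have "\<dots> \<le> (\<integral>\<^sup>+x. ennreal c \<partial>measure_pmf p)"
  proof (rule nn_integral_mono_AE)
    show "AE x in measure_pmf p. emeasure (measure_pmf (f x)) A \<le> ennreal c"
      unfolding AE_measure_pmf_iff
      using assms by (auto simp: measure_pmf.emeasure_eq_measure intro: ennreal_leI)
  qed
  also have "\<dots> = ennreal c" by simp
  finally show ?thesis using c0 by (simp add: ennreal_le_iff)
qed

lemma prob_component:
  fixes N :: nat
  assumes "i < N"
  shows "measure_pmf.prob (Pi_pmf {..<N} d (\<lambda>_. D)) {\<omega>. Q (\<omega> i)} = measure_pmf.prob D {y. Q y}"
proof -
  have "measure_pmf.prob (map_pmf (\<lambda>\<omega>. \<omega> i) (Pi_pmf {..<N} d (\<lambda>_. D))) {y. Q y}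
      = measure_pmf.prob (Pi_pmf {..<N} d (\<lambda>_. D)) {\<omega>. Q (\<omega> i)}"
    by (simp add: vimage_def)
  moreover have "map_pmf (\<lambda>\<omega>. \<omega> i) (Pi_pmf {..<N} d (\<lambda>_. D)) = D"
    using assms by (subst Pi_pmf_component) auto
  ultimately show ?thesis by simp
qed

lemma inner_hoeff:
  assumes a: "\<bar>\<alpha>\<bar> \<le> 1" and N: "N > 0" and e: "\<epsilon> \<ge> 0"
  shows "measure_pmf.prob (Pi_pmf {..<N} False (\<lambda>_. bernoulli_pmf ((1 + \<alpha>) / 2)))
           {r. \<epsilon> \<le> \<bar>emp_mean N r - \<alpha>\<bar>} \<le> 2 * exp (-2 * real N * \<epsilon>\<^sup>2 / 4)"
proof -
  have q: "0 \<le> (1 + \<alpha>) / 2" "(1 + \<alpha>) / 2 \<le> 1" using a by auto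
  have E: "measure_pmf.expectation (bernoulli_pmf ((1 + \<alpha>) / 2)) (\<lambda>b. if b then 1 else -1 :: real) = \<alpha>"
    using q by (simp add: field_simps)
  have "measure_pmf.prob (Pi_pmf {..<N} False (\<lambda>_. bernoulli_pmf ((1 + \<alpha>) / 2)))
           {r. \<epsilon> \<le> \<bar>emp_mean N r - measure_pmf.expectation (bernoulli_pmf ((1 + \<alpha>) / 2)) (\<lambda>b. if b then 1 else -1 :: real)\<bar>}
        \<le> 2 * exp (-2 * real N * \<epsilon>\<^sup>2 / (1 - (-1))\<^sup>2)"
    unfolding emp_mean_def
    by (rule hoeffding_Pi_pmf[where g = "\<lambda>b. if b then 1 else -1", OF N _ _ e]) auto
  then show ?thesis using E by (simp add: power2_eq_square)
qed

lemma mean_diff: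
  fixes a b c :: "nat \<Rightarrow> real"
  assumes N: "N > 0" and h: "\<And>i. i < N \<Longrightarrow> \<bar>a i - b i\<bar> \<le> c i + K"
  shows "\<bar>(\<Sum>i<N. a i) / real N - (\<Sum>i<N. b i) / real N\<bar> \<le> (\<Sum>i<N. c i) / real N + K"
proof -
  have "\<bar>(\<Sum>i<N. a i) - (\<Sum>i<N. b i)\<bar> = \<bar>\<Sum>i<N. a i - b i\<bar>" by (simp add: sum_subtractf)
  also have "\<dots> \<le> (\<Sum>i<N. \<bar>a i - b i\<bar>)" by (rule sum_abs)
  also have "\<dots> \<le> (\<Sum>i<N. c i + K)" by (rule sum_mono) (simp add: h)
  also have "\<dots> = (\<Sum>i<N. c i) + real N * K" by (simp add: sum.distrib)
  finally have "\<bar>(\<Sum>i<N. a i) - (\<Sum>i<N. b i)\<bar> / real N \<le> ((\<Sum>i<N. c i) + real N * K) / real N"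
    using N by (simp add: divide_right_mono)
  also have "\<dots> = (\<Sum>i<N. c i) / real N + K" using N by (simp add: field_simps)
  finally show ?thesis by (simp add: diff_divide_distrib[symmetric])
qed



theorem theorem14:
  fixes n N1 N2 :: nat and \<psi> \<phi> :: "bool list \<Rightarrow> complex"
    and \<epsilon>1 \<epsilon>2 \<delta> \<Delta> g0 :: real and pt :: "(bool list \<times> bool list) pmf"
  assumes "pure_state n \<psi>" and "pure_state n \<phi>"
    and "\<epsilon>1 > 0" and "\<epsilon>2 > 0" and "\<delta> > 0"
    and "0 \<le> g0" and "g0 \<le> 1"
    and "set_pmf pt \<subseteq> pauli_labels n"
    and "tv_dist n (p_mix n \<psi> \<phi>) pt < \<Delta>"
    and "real N1 \<ge> ln (8 / \<delta>) / (2 * \<epsilon>1\<^sup>2)"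
    and "real N2 \<ge> (2 / \<epsilon>2\<^sup>2) * ln (8 * real N1 / \<delta>)"
  shows "measure_pmf.prob (protocol_pmf n \<psi> \<phi> pt N1 N2)
           {\<omega>. \<bar>estimator g0 N1 N2 \<omega> - (1 + overlap n \<psi> \<phi>) / 2\<bar>
                \<le> 2 * \<epsilon>1 + 2 * sqrt \<epsilon>2 + cdf n \<psi> \<epsilon>2 / 2 + cdf n \<phi> \<epsilon>2 / 2 + 2 * \<Delta>}
         \<ge> 1 - \<delta>"
proof (cases "\<delta> \<ge> 1")
  case True
  then show ?thesis using measure_nonneg[of "measure_pmf (protocol_pmf n \<psi> \<phi> pt N1 N2)"] 
    by (smt (verit))
next
  case False
  then have d1: "\<delta> < 1" by simp
  have e1: "\<epsilon>1 > 0" and e2: "\<epsilon>2 > 0" and d0: "\<delta> > 0" using assms by auto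
  let ?PL = "pauli_labels n"
  define \<Psi> where "\<Psi> = alpha n \<psi>"
  define \<Phi> where "\<Phi> = alpha n \<phi>"
  define Gt where "Gt x = G g0 (\<Psi> x) (\<Phi> x)" for x
  define ind where "ind x = (if (\<Psi> x)\<^sup>2 < \<epsilon>2 \<and> (\<Phi> x)\<^sup>2 < \<epsilon>2 then 1 else (0::real))" for x
  define Pr where "Pr x = Pi_pmf {..<N2} False (\<lambda>_. measure_outcome n \<psi> x)" for x
  define Ps where "Ps x = Pi_pmf {..<N2} False (\<lambda>_. measure_outcome n \<phi> x)" for x
  define D where "D = bind_pmf pt (\<lambda>x. bind_pmf (Pr x) (\<lambda>r. bind_pmf (Ps x) (\<lambda>s. return_pmf (x, r, s))))"
  define \<Omega> where "\<Omega> = protocol_pmf n \<psi> \<phi> pt N1 N2"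
  have \<Omega>: "\<Omega> = Pi_pmf {..<N1} undefined (\<lambda>_. D)"
    by (simp add: \<Omega>_def protocol_pmf_def D_def Pr_def Ps_def)

  have absP: "\<bar>\<Psi> x\<bar> \<le> 1" "\<bar>\<Phi> x\<bar> \<le> 1" for x
    using abs_alpha_le[OF assms(1)] abs_alpha_le[OF assms(2)] by (simp_all add: \<Psi>_def \<Phi>_def)
  have Gt_rng: "0 \<le> Gt x \<and> Gt x \<le> 1" for x using G_range[OF assms(6,7)] by (simp add: Gt_def)

  have l8: "ln (8 / \<delta>) > 0" using d1 d0 by simp
  have "ln (8 / \<delta>) / (2 * \<epsilon>1\<^sup>2) > 0" using l8 e1 by simp
  then have N1pos: "N1 > 0" using assms(10) by linarith
  have "8 * real N1 / \<delta> \<ge> 8 / \<delta>" using N1pos d0 by (simp add: divide_right_mono)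
  then have l8N: "ln (8 * real N1 / \<delta>) > 0" using d1 d0 by (smt (verit) ln_gt_zero less_divide_eq_1_pos)
  have "(2 / \<epsilon>2\<^sup>2) * ln (8 * real N1 / \<delta>) > 0" using l8N e2 by simp
  then have N2pos: "N2 > 0" using assms(11) by linarith
  have ex1: "2 * exp (-2 * real N1 * \<epsilon>1\<^sup>2 / (1 - 0)\<^sup>2) \<le> \<delta> / 4"
  proof -
    have "ln (8 / \<delta>) \<le> 2 * \<epsilon>1\<^sup>2 * real N1" using assms(10) e1 by (simp add: pos_divide_le_eq mult.commute)
    then have "-2 * real N1 * \<epsilon>1\<^sup>2 / (1 - 0)\<^sup>2 \<le> - ln (8 / \<delta>)" by (simp add: mult_ac)
    then have "exp (-2 * real N1 * \<epsilon>1\<^sup>2 / (1 - 0)\<^sup>2) \<le> exp (- ln (8 / \<delta>))" by simp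
    also have "\<dots> = \<delta> / 8" using d0 by (simp add: exp_minus)
    finally show ?thesis by simp
  qed
  have ex2: "2 * exp (-2 * real N2 * \<epsilon>2\<^sup>2 / 4) \<le> \<delta> / (4 * real N1)"
  proof -
    have "ln (8 * real N1 / \<delta>) \<le> real N2 * \<epsilon>2\<^sup>2 / 2"
      using assms(11) e2 by (simp add: field_simps)
    then have "-2 * real N2 * \<epsilon>2\<^sup>2 / 4 \<le> - ln (8 * real N1 / \<delta>)" by simp
    then have "exp (-2 * real N2 * \<epsilon>2\<^sup>2 / 4) \<le> exp (- ln (8 * real N1 / \<delta>))" by simp
    also have "\<dots> = \<delta> / (8 * real N1)" using d0 N1pos by (simp add: exp_minus)
    finally show ?thesis by simp
  qed

  have mfst: "map_pmf fst D = pt"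
    by (simp add: D_def map_bind_pmf bind_return_pmf')
  have mr: "map_pmf (\<lambda>y. (fst y, fst (snd y))) D = bind_pmf pt (\<lambda>x. map_pmf (\<lambda>r. (x, r)) (Pr x))"
    unfolding D_def map_bind_pmf by (simp add: map_pmf_def bind_return_pmf)
  have ms: "map_pmf (\<lambda>y. (fst y, snd (snd y))) D = bind_pmf pt (\<lambda>x. map_pmf (\<lambda>s. (x, s)) (Ps x))"
    unfolding D_def map_bind_pmf by (simp add: map_pmf_def bind_return_pmf)

  have ED: "measure_pmf.expectation D (\<lambda>y. h (fst y)) = (\<Sum>x\<in>?PL. pmf pt x * h x)" for h :: "_ \<Rightarrow> real"
  proof -
    have "measure_pmf.expectation D (\<lambda>y. h (fst y)) = measure_pmf.expectation (map_pmf fst D) h"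
      by simp
    also have "\<dots> = (\<Sum>x\<in>?PL. h x * pmf pt x)"
      unfolding mfst by (rule integral_measure_pmf_real) (use assms(8) in auto)
    finally show ?thesis by (simp add: mult.commute)
  qed

  define A where "A i = {\<omega> :: nat \<Rightarrow> (bool list \<times> bool list) \<times> (nat \<Rightarrow> bool) \<times> (nat \<Rightarrow> bool). \<epsilon>2 < \<bar>emp_mean N2 (fst (snd (\<omega> i))) - \<Psi> (fst (\<omega> i))\<bar>}" for i :: nat
  define B where "B i = {\<omega> :: nat \<Rightarrow> (bool list \<times> bool list) \<times> (nat \<Rightarrow> bool) \<times> (nat \<Rightarrow> bool). \<epsilon>2 < \<bar>emp_mean N2 (snd (snd (\<omega> i))) - \<Phi> (fst (\<omega> i))\<bar>}" for i :: nat
  have pA: "measure_pmf.prob \<Omega> (A i) \<le> \<delta> / (4 * real N1)" if i: "i < N1" for i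
  proof -
    have "measure_pmf.prob \<Omega> (A i) = measure_pmf.prob D {y. \<epsilon>2 < \<bar>emp_mean N2 (fst (snd y)) - \<Psi> (fst y)\<bar>}"
      unfolding \<Omega> A_def by (rule prob_component[OF i, where Q = "\<lambda>y. \<epsilon>2 < \<bar>emp_mean N2 (fst (snd y)) - \<Psi> (fst y)\<bar>"])
    also have "\<dots> = measure_pmf.prob (map_pmf (\<lambda>y. (fst y, fst (snd y))) D) {(x, r). \<epsilon>2 < \<bar>emp_mean N2 r - \<Psi> x\<bar>}"
      by (simp add: vimage_def case_prod_unfold)
    also have "\<dots> \<le> \<delta> / (4 * real N1)"
      unfolding mr
    proof (rule prob_bind_le)
      fix x
      have "measure_pmf.prob (map_pmf (\<lambda>r. (x, r)) (Pr x)) {(x, r). \<epsilon>2 < \<bar>emp_mean N2 r - \<Psi> x\<bar>}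
          = measure_pmf.prob (Pr x) {r. \<epsilon>2 < \<bar>emp_mean N2 r - \<Psi> x\<bar>}"
        by (simp add: vimage_def)
      also have "\<dots> \<le> measure_pmf.prob (Pr x) {r. \<epsilon>2 \<le> \<bar>emp_mean N2 r - \<Psi> x\<bar>}"
        by (rule measure_pmf.finite_measure_mono) auto
      also have "\<dots> \<le> 2 * exp (-2 * real N2 * \<epsilon>2\<^sup>2 / 4)"
        unfolding Pr_def measure_outcome_def \<Psi>_def[symmetric]
        by (rule inner_hoeff[OF absP(1) N2pos]) (use e2 in auto)
      also have "\<dots> \<le> \<delta> / (4 * real N1)" by (rule ex2)
      finally show "measure_pmf.prob (map_pmf (\<lambda>r. (x, r)) (Pr x)) {(x, r). \<epsilon>2 < \<bar>emp_mean N2 r - \<Psi> x\<bar>} \<le> \<delta> / (4 * real N1)" .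
    qed
    finally show ?thesis .
  qed
  have pB: "measure_pmf.prob \<Omega> (B i) \<le> \<delta> / (4 * real N1)" if i: "i < N1" for i
  proof -
    have "measure_pmf.prob \<Omega> (B i) = measure_pmf.prob D {y. \<epsilon>2 < \<bar>emp_mean N2 (snd (snd y)) - \<Phi> (fst y)\<bar>}"
      unfolding \<Omega> B_def by (rule prob_component[OF i, where Q = "\<lambda>y. \<epsilon>2 < \<bar>emp_mean N2 (snd (snd y)) - \<Phi> (fst y)\<bar>"])
    also have "\<dots> = measure_pmf.prob (map_pmf (\<lambda>y. (fst y, snd (snd y))) D) {(x, r). \<epsilon>2 < \<bar>emp_mean N2 r - \<Phi> x\<bar>}"
      by (simp add: vimage_def case_prod_unfold)
    also have "\<dots> \<le> \<delta> / (4 * real N1)"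
      unfolding ms
    proof (rule prob_bind_le)
      fix x
      have "measure_pmf.prob (map_pmf (\<lambda>r. (x, r)) (Ps x)) {(x, r). \<epsilon>2 < \<bar>emp_mean N2 r - \<Phi> x\<bar>}
          = measure_pmf.prob (Ps x) {r. \<epsilon>2 < \<bar>emp_mean N2 r - \<Phi> x\<bar>}"
        by (simp add: vimage_def)
      also have "\<dots> \<le> measure_pmf.prob (Ps x) {r. \<epsilon>2 \<le> \<bar>emp_mean N2 r - \<Phi> x\<bar>}"
        by (rule measure_pmf.finite_measure_mono) auto
      also have "\<dots> \<le> 2 * exp (-2 * real N2 * \<epsilon>2\<^sup>2 / 4)"
        unfolding Ps_def measure_outcome_def \<Phi>_def[symmetric]
        by (rule inner_hoeff[OF absP(2) N2pos]) (use e2 in auto)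
      also have "\<dots> \<le> \<delta> / (4 * real N1)" by (rule ex2)
      finally show "measure_pmf.prob (map_pmf (\<lambda>r. (x, r)) (Ps x)) {(x, r). \<epsilon>2 < \<bar>emp_mean N2 r - \<Phi> x\<bar>} \<le> \<delta> / (4 * real N1)" .
    qed
    finally show ?thesis .
  qed
  define E1 where "E1 = (\<Union>i\<in>{..<N1}. A i \<union> B i)"
  have pE1: "measure_pmf.prob \<Omega> E1 \<le> \<delta> / 2"
  proof -
    have "measure_pmf.prob \<Omega> E1 \<le> (\<Sum>i<N1. measure_pmf.prob \<Omega> (A i \<union> B i))"
      unfolding E1_def by (rule measure_pmf.finite_measure_subadditive_finite) auto
    also have "\<dots> \<le> (\<Sum>i<N1. \<delta> / (4 * real N1) + \<delta> / (4 * real N1))"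
    proof (rule sum_mono)
      fix i assume "i \<in> {..<N1}"
      then have i: "i < N1" by simp
      have "measure_pmf.prob \<Omega> (A i \<union> B i) \<le> measure_pmf.prob \<Omega> (A i) + measure_pmf.prob \<Omega> (B i)"
        by (rule measure_Un_le) auto
      then show "measure_pmf.prob \<Omega> (A i \<union> B i) \<le> \<delta> / (4 * real N1) + \<delta> / (4 * real N1)"
        using pA[OF i] pB[OF i] by linarith
    qed
    also have "\<dots> = \<delta> / 2" using N1pos by (simp add: field_simps)
    finally show ?thesis .
  qed

  define E2 where "E2 = {\<omega> :: nat \<Rightarrow> (bool list \<times> bool list) \<times> (nat \<Rightarrow> bool) \<times> (nat \<Rightarrow> bool). \<epsilon>1 \<le> \<bar>(\<Sum>i<N1. Gt (fst (\<omega> i))) / real N1 - measure_pmf.expectation D (\<lambda>y. Gt (fst y))\<bar>}"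
  define E3 where "E3 = {\<omega> :: nat \<Rightarrow> (bool list \<times> bool list) \<times> (nat \<Rightarrow> bool) \<times> (nat \<Rightarrow> bool). \<epsilon>1 \<le> \<bar>(\<Sum>i<N1. ind (fst (\<omega> i))) / real N1 - measure_pmf.expectation D (\<lambda>y. ind (fst y))\<bar>}"
  have pE2: "measure_pmf.prob \<Omega> E2 \<le> \<delta> / 4"
  proof -
    have "measure_pmf.prob \<Omega> E2 \<le> 2 * exp (-2 * real N1 * \<epsilon>1\<^sup>2 / (1 - 0)\<^sup>2)"
      unfolding \<Omega> E2_def
      by (rule hoeffding_Pi_pmf[where g = "\<lambda>y. Gt (fst y)", OF N1pos]) (use Gt_rng e1 in auto)
    then show ?thesis using ex1 by linarith
  qed
  have pE3: "measure_pmf.prob \<Omega> E3 \<le> \<delta> / 4"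
  proof -
    have "measure_pmf.prob \<Omega> E3 \<le> 2 * exp (-2 * real N1 * \<epsilon>1\<^sup>2 / (1 - 0)\<^sup>2)"
      unfolding \<Omega> E3_def
      by (rule hoeffding_Pi_pmf[where g = "\<lambda>y. ind (fst y)", OF N1pos]) (use e1 in \<open>auto simp: ind_def\<close>)
    then show ?thesis using ex1 by linarith
  qed
  define E where "E = E1 \<union> E2 \<union> E3"
  have pE: "measure_pmf.prob \<Omega> E \<le> \<delta>"
  proof -
    have "measure_pmf.prob \<Omega> E \<le> measure_pmf.prob \<Omega> (E1 \<union> E2) + measure_pmf.prob \<Omega> E3"
      unfolding E_def by (rule measure_Un_le) auto
    moreover have "measure_pmf.prob \<Omega> (E1 \<union> E2) \<le> measure_pmf.prob \<Omega> E1 + measure_pmf.prob \<Omega> E2"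
      by (rule measure_Un_le) auto
    ultimately show ?thesis using pE1 pE2 pE3 by linarith
  qed

  define f where "f = (1 + overlap n \<psi> \<phi>) / 2"
  define RHS where "RHS = 2 * \<epsilon>1 + 2 * sqrt \<epsilon>2 + cdf n \<psi> \<epsilon>2 / 2 + cdf n \<phi> \<epsilon>2 / 2 + 2 * \<Delta>"
  have s1: "(\<Sum>x\<in>?PL. p_mix n \<psi> \<phi> x) = 1" by (rule pmix_sum[OF assms(1,2)])
  have t1: "\<bar>(\<Sum>x\<in>?PL. pmf pt x * Gt x) - f\<bar> < \<Delta>"
  proof -
    have "\<bar>(\<Sum>x\<in>?PL. pmf pt x * Gt x) - (\<Sum>x\<in>?PL. p_mix n \<psi> \<phi> x * Gt x)\<bar> \<le> tv_dist n (p_mix n \<psi> \<phi>) pt"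
      by (rule tv_bound[OF assms(8) s1]) (use Gt_rng in auto)
    moreover have "(\<Sum>x\<in>?PL. p_mix n \<psi> \<phi> x * Gt x) = f"
      unfolding f_def Gt_def \<Psi>_def \<Phi>_def by (rule pmix_G[OF assms(1,2)])
    ultimately show ?thesis using assms(9) by linarith
  qed
  have t2: "(\<Sum>x\<in>?PL. pmf pt x * ind x) < cdf n \<psi> \<epsilon>2 / 2 + cdf n \<phi> \<epsilon>2 / 2 + \<Delta>"
  proof -
    have "\<bar>(\<Sum>x\<in>?PL. pmf pt x * ind x) - (\<Sum>x\<in>?PL. p_mix n \<psi> \<phi> x * ind x)\<bar> \<le> tv_dist n (p_mix n \<psi> \<phi>) pt"
      by (rule tv_bound[OF assms(8) s1]) (auto simp: ind_def)
    moreover have "(\<Sum>x\<in>?PL. p_mix n \<psi> \<phi> x * ind x) \<le> cdf n \<psi> \<epsilon>2 / 2 + cdf n \<phi> \<epsilon>2 / 2"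
      unfolding ind_def \<Psi>_def \<Phi>_def by (rule bad_bound)
    ultimately show ?thesis using assms(9) by linarith
  qed
  have good: "\<bar>estimator g0 N1 N2 \<omega> - f\<bar> \<le> RHS" if nE: "\<omega> \<notin> E" for \<omega>
  proof -
    define x where "x i = fst (\<omega> i)" for i
    define u where "u i = emp_mean N2 (fst (snd (\<omega> i)))" for i
    define v where "v i = emp_mean N2 (snd (snd (\<omega> i)))" for i
    have per: "\<bar>G g0 (u i) (v i) - Gt (x i)\<bar> \<le> ind (x i) + 2 * sqrt \<epsilon>2" if i: "i < N1" for i
    proof -
      have "\<omega> \<notin> A i" "\<omega> \<notin> B i" using nE i by (auto simp: E_def E1_def)
      then have cu: "\<bar>u i - \<Psi> (x i)\<bar> \<le> \<epsilon>2" and cv: "\<bar>v i - \<Phi> (x i)\<bar> \<le> \<epsilon>2"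
        by (auto simp: A_def B_def u_def v_def x_def)
      show ?thesis
      proof (cases "(\<Psi> (x i))\<^sup>2 < \<epsilon>2 \<and> (\<Phi> (x i))\<^sup>2 < \<epsilon>2")
        case True
        then have "ind (x i) = 1" by (simp add: ind_def)
        moreover have "\<bar>G g0 (u i) (v i) - Gt (x i)\<bar> \<le> 1"
          using G_range[OF assms(6,7), of "u i" "v i"] Gt_rng[of "x i"] by linarith
        moreover have "sqrt \<epsilon>2 \<ge> 0" using e2 by simp
        ultimately show ?thesis by linarith
      next
        case False
        then have "ind (x i) = 0" by (simp add: ind_def)
        moreover have "\<bar>G g0 (u i) (v i) - Gt (x i)\<bar> \<le> 2 * sqrt \<epsilon>2"
          unfolding Gt_def by (rule G_close[OF assms(6,7) e2 cu cv False])
        ultimately show ?thesis by linarith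
      qed
    qed
    have m1: "\<bar>(\<Sum>i<N1. G g0 (u i) (v i)) / real N1 - (\<Sum>i<N1. Gt (x i)) / real N1\<bar>
              \<le> (\<Sum>i<N1. ind (x i)) / real N1 + 2 * sqrt \<epsilon>2"
      by (rule mean_diff[OF N1pos per])
    have est: "estimator g0 N1 N2 \<omega> = (\<Sum>i<N1. G g0 (u i) (v i)) / real N1"
      by (simp add: estimator_def u_def v_def)
    have "\<omega> \<notin> E2" "\<omega> \<notin> E3" using nE by (auto simp: E_def)
    then have m2: "\<bar>(\<Sum>i<N1. Gt (x i)) / real N1 - (\<Sum>x\<in>?PL. pmf pt x * Gt x)\<bar> < \<epsilon>1"
      and m3: "\<bar>(\<Sum>i<N1. ind (x i)) / real N1 - (\<Sum>x\<in>?PL. pmf pt x * ind x)\<bar> < \<epsilon>1"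
      by (auto simp: E2_def E3_def ED x_def not_le)
    show ?thesis using m1 m2 m3 t1 t2 unfolding est RHS_def by linarith
  qed
  have "1 - \<delta> \<le> 1 - measure_pmf.prob \<Omega> E" using pE by linarith
  also have "\<dots> = measure_pmf.prob \<Omega> (UNIV - E)"
    using measure_pmf.prob_compl[of E \<Omega>] by simp
  also have "\<dots> \<le> measure_pmf.prob \<Omega> {\<omega>. \<bar>estimator g0 N1 N2 \<omega> - f\<bar> \<le> RHS}"
    by (rule measure_pmf.finite_measure_mono) (use good in auto)
  finally show ?thesis by (simp add: \<Omega>_def f_def RHS_def)
qed
end
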